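(* For every nonzero $\xi\in\mathbb{R}^4$ the sequence $0\leftarrow\mathbb{C}^3\xleftarrow{D_0(\xi)^t}\mathbb{C}^4\xleftarrow{D_1(\xi)^t}\mathbb{C}^1\leftarrow0$ is exact, i.e. $D_0(\xi)^t$ is surjective, $D_1(\xi)^t$ is injective and $\operatorname{Im}D_1(\xi)^t=\ker D_0(\xi)^t$.
   Context: With $\eta_0=\xi_0-i\xi_1$, $\eta_1=\xi_2-i\xi_3$ (so $\bar\eta_0=\xi_0+i\xi_1$, $\bar\eta_1=\xi_2+i\xi_3$ for real $\xi$), the symbol matrices (obtained from the 2-Cauchy–Fueter operators by replacing $\partial_{x_j}$ by $\frac1i\xi_j$), with $t$ denoting transpose, are $D_0(\xi)^t=\frac1i\begin{pmatrix}-\bar\eta_1&\eta_0&0&0\\-\bar\eta_0&-\eta_1&-\bar\eta_1&\eta_0\\0&0&-\bar\eta_0&-\eta_1\end{pmatrix}$ and $D_1(\xi)^t=\frac1i\begin{pmatrix}-\eta_0\\-\bar\eta_1\\\eta_1\\-\bar\eta_0\end{pmatrix}$. *)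

theory Defs
  imports "HOL-Analysis.Analysis" "HOL-Library.Numeral_Type"
begin

text \<open>xi = (xi_0, xi_1, xi_2, xi_3) in R^4, stored as xi = vector [xi_0, xi_1, xi_2, xi_3], i.e. xi_k = xi $ (k+1) (library convention of vector: 1-based).\<close>

definition eta0 :: "real^4 \<Rightarrow> complex" where
  "eta0 \<xi> = Complex (\<xi> $ 1) (- (\<xi> $ 2))"

definition eta1 :: "real^4 \<Rightarrow> complex" where
  "eta1 \<xi> = Complex (\<xi> $ 3) (- (\<xi> $ 4))"

definition D0t :: "real^4 \<Rightarrow> complex^4^3" where
  "D0t \<xi> = (\<chi> i j. (1 / \<i>) *
     (vector [vector [- cnj (eta1 \<xi>), eta0 \<xi>, 0, 0],
              vector [- cnj (eta0 \<xi>), - eta1 \<xi>, - cnj (eta1 \<xi>), eta0 \<xi>],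
              vector [0, 0, - cnj (eta0 \<xi>), - eta1 \<xi>]] :: complex^4^3) $ i $ j)"

definition D1t :: "real^4 \<Rightarrow> complex^1^4" where
  "D1t \<xi> = (\<chi> i j. (1 / \<i>) *
     (vector [vector [- eta0 \<xi>], vector [- cnj (eta1 \<xi>)],
              vector [eta1 \<xi>], vector [- cnj (eta0 \<xi>)]] :: complex^1^4) $ i $ j)"

end

theory Submission imports Defs begin
lemma vector_4 [simp]:
 "(vector [x,y,z,w] ::('a::zero)^4)$1 = x"
 "(vector [x,y,z,w] ::('a::zero)^4)$2 = y"
 "(vector [x,y,z,w] ::('a::zero)^4)$3 = z"
 "(vector [x,y,z,w] ::('a::zero)^4)$4 = w"
  unfolding vector_def by simp_all

lemma D0c: "(D0t \<xi> *v v)$1 = (1/\<i>) * (- cnj (eta1 \<xi>) * v$1 + eta0 \<xi> * v$2)"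
  "(D0t \<xi> *v v)$2 = (1/\<i>) * (- cnj (eta0 \<xi>) * v$1 - eta1 \<xi> * v$2 - cnj (eta1 \<xi>) * v$3 + eta0 \<xi> * v$4)"
  "(D0t \<xi> *v v)$3 = (1/\<i>) * (- cnj (eta0 \<xi>) * v$3 - eta1 \<xi> * v$4)"
  by (simp_all add: D0t_def matrix_vector_mult_def sum_4 algebra_simps)

lemma D1c: "(D1t \<xi> *v w)$1 = (1/\<i>) * (- eta0 \<xi>) * w$1"
  "(D1t \<xi> *v w)$2 = (1/\<i>) * (- cnj (eta1 \<xi>)) * w$1"
  "(D1t \<xi> *v w)$3 = (1/\<i>) * eta1 \<xi> * w$1"
  "(D1t \<xi> *v w)$4 = (1/\<i>) * (- cnj (eta0 \<xi>)) * w$1"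
  by (simp_all add: D1t_def matrix_vector_mult_def sum_1)

lemma Nnz: assumes "\<xi> \<noteq> 0" shows "eta0 \<xi> * cnj (eta0 \<xi>) + eta1 \<xi> * cnj (eta1 \<xi>) \<noteq> 0"
proof
  assume h: "eta0 \<xi> * cnj (eta0 \<xi>) + eta1 \<xi> * cnj (eta1 \<xi>) = 0"
  have "Re (eta0 \<xi> * cnj (eta0 \<xi>) + eta1 \<xi> * cnj (eta1 \<xi>)) = (\<xi>$1)^2 + (\<xi>$2)^2 + (\<xi>$3)^2 + (\<xi>$4)^2"
    by (simp add: eta0_def eta1_def power2_eq_square)
  with h have "(\<xi>$1)^2 + (\<xi>$2)^2 + (\<xi>$3)^2 + (\<xi>$4)^2 = 0" by simp
  then have "(\<xi>$1)^2 = 0 \<and> (\<xi>$2)^2 = 0 \<and> (\<xi>$3)^2 = 0 \<and> (\<xi>$4)^2 = 0"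
    by (smt (verit) zero_le_power2)
  then have "\<xi>$1 = 0 \<and> \<xi>$2 = 0 \<and> \<xi>$3 = 0 \<and> \<xi>$4 = 0"
    by simp
  then have "\<xi> = 0" by (simp add: vec_eq_iff forall_4)
  with assms show False by simp
qed

theorem lemma3p1:
  fixes \<xi> :: "real^4"
  assumes "\<xi> \<noteq> 0"
  shows "surj (\<lambda>v. D0t \<xi> *v v) \<and> inj (\<lambda>w. D1t \<xi> *v w) \<and>
         range (\<lambda>w. D1t \<xi> *v w) = {v. D0t \<xi> *v v = 0}"
proof -
  define a where "a = eta0 \<xi>"
  define b where "b = eta1 \<xi>"
  define N where "N = a * cnj a + b * cnj b"
  have N: "N \<noteq> 0" using Nnz[OF assms] by (simp add: N_def a_def b_def)
  have ab: "a \<noteq> 0 \<or> b \<noteq> 0" using N by (auto simp: N_def)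
  note D0 = D0c[of \<xi>, folded a_def b_def]
  note D1 = D1c[of \<xi>, folded a_def b_def]
  have S: "surj (\<lambda>v. D0t \<xi> *v v)"
  proof (rule surjI)
    fix y :: "complex^3"
    define z1 where "z1 = y$1 / N"
    define z2 where "z2 = y$2 / (2*N)"
    define z3 where "z3 = y$3 / N"
    show "D0t \<xi> *v (vector [\<i>*(-b*z1 - a*z2), \<i>*(cnj a*z1 - cnj b*z2),
               \<i>*(-b*z2 - a*z3), \<i>*(cnj a*z2 - cnj b*z3)]) = y"
    proof -
      have y1: "N*z1 = y$1" "2*N*z2 = y$2" "N*z3 = y$3" using N by (simp_all add: z1_def z2_def z3_def)
      have e1: "- cnj b * (\<i>*(-b*z1 - a*z2)) + a * (\<i>*(cnj a*z1 - cnj b*z2)) = \<i>*(N*z1)"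
        unfolding N_def by (simp add: algebra_simps)
      have e2: "- cnj a * (\<i>*(-b*z1 - a*z2)) - b * (\<i>*(cnj a*z1 - cnj b*z2)) - cnj b * (\<i>*(-b*z2 - a*z3)) + a * (\<i>*(cnj a*z2 - cnj b*z3)) = \<i>*(2*N*z2)"
        unfolding N_def by (simp add: algebra_simps)
      have e3: "- cnj a * (\<i>*(-b*z2 - a*z3)) - b * (\<i>*(cnj a*z2 - cnj b*z3)) = \<i>*(N*z3)"
        unfolding N_def by (simp add: algebra_simps)
      show ?thesis unfolding vec_eq_iff forall_3 D0 vector_4 e1 e2 e3 y1 by simp
    qed
  qed
  have I: "inj (\<lambda>w. D1t \<xi> *v w)"
  proof (rule injI)
    fix w1 w2 :: "complex^1"
    assume h: "D1t \<xi> *v w1 = D1t \<xi> *v w2"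
    have "w1$1 = w2$1"
    proof (cases "a = 0")
      case False
      have "(D1t \<xi> *v w1)$1 = (D1t \<xi> *v w2)$1" using h by simp
      then show ?thesis using False by (simp add: D1)
    next
      case True
      then have "b \<noteq> 0" using ab by simp
      have "(D1t \<xi> *v w1)$3 = (D1t \<xi> *v w2)$3" using h by simp
      then show ?thesis using \<open>b \<noteq> 0\<close> by (simp add: D1)
    qed
    then show "w1 = w2" by (simp add: vec_eq_iff)
  qed
  have R1: "range (\<lambda>w. D1t \<xi> *v w) \<subseteq> {v. D0t \<xi> *v v = 0}"
    by (auto simp: vec_eq_iff forall_3 D0 D1 algebra_simps)
  have R2: "{v. D0t \<xi> *v v = 0} \<subseteq> range (\<lambda>w. D1t \<xi> *v w)"
  proof
    fix v :: "complex^4"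
    assume "v \<in> {v. D0t \<xi> *v v = 0}"
    then have "(D0t \<xi> *v v)$1 = 0" "(D0t \<xi> *v v)$2 = 0" "(D0t \<xi> *v v)$3 = 0" by auto
    then have h1: "- cnj b * v$1 + a * v$2 = 0"
      and h2: "- cnj a * v$1 - b * v$2 - cnj b * v$3 + a * v$4 = 0"
      and h3: "- cnj a * v$3 - b * v$4 = 0" by (simp_all add: D0)
    define s where "s = - cnj a * v$1 - b * v$2 + cnj b * v$3 - a * v$4"
    have k1: "- a * s = 2*N * v$1" unfolding s_def N_def using h1 h2 h3 by algebra
    have k2: "- cnj b * s = 2*N * v$2" unfolding s_def N_def using h1 h2 h3 by algebra
    have k3: "b * s = 2*N * v$3" unfolding s_def N_def using h1 h2 h3 by algebra
    have k4: "- cnj a * s = 2*N * v$4" unfolding s_def N_def using h1 h2 h3 by algebra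
    have "v = D1t \<xi> *v (vec (\<i> * s / (2*N)))"
      unfolding vec_eq_iff forall_4 D1 using N k1 k2 k3 k4
      by (simp add: field_simps)
    then show "v \<in> range (\<lambda>w. D1t \<xi> *v w)" by blast
  qed
  show ?thesis using S I R1 R2 by blast
qed

end
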